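(* Let $\xi=\xi_{\{\mu\}}$ be a non-trivial GCKV on $\mathbb{E}^2$ with parameters $\mu=(\mu_0,\mu_1,\mu_2)$ and set $\mu_0':=\frac14(2\mu_0\mu_2-\mu_1^2)$. Let $\mathbb{A}_0\in SL(2,\mathbb{C})$ be any element of the form $\mathbb{A}_0=\begin{pmatrix}\frac12(\delta\mu_2-\gamma\mu_1)&\frac12\delta\mu_1-\gamma\mu_0\\ \gamma&\delta\end{pmatrix}$ with $\frac12\delta^2\mu_2-\gamma\delta\mu_1+\gamma^2\mu_0=1$. Then the set of all $\mathbb{A}\in SL(2,\mathbb{C})$ such that $\chi^{\mathbb{A}}_\star(\xi)$ is in canonical form is $\mathbb{A}_{\mu_0'}\cdot\mathbb{A}_0=\{\mathbb{B}\mathbb{A}_0:\mathbb{B}\in\mathbb{A}_{\mu_0'}\}$, where $\mathbb{A}_{c}:=\left\{\begin{pmatrix}\delta'&-\gamma' c\\ \gamma'&\delta'\end{pmatrix}:\delta'^2+c\gamma'^2=1\right\}$.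
   Context: $\mathbb{E}^2$ is the Euclidean plane with Cartesian coordinates $\{x,y\}$ and $z=\frac12(x-iy)$. A GCKV with parameters $\mu\in\mathbb{C}^3$ is $\xi_{\{\mu\}}=(\mu_0+\mu_1z+\frac12\mu_2z^2)\partial_z+(\bar\mu_0+\bar\mu_1\bar z+\frac12\bar\mu_2\bar z^2)\partial_{\bar z}$; it is in canonical form when $\mu_1=0,\mu_2=2$. For $\mathbb{A}=\begin{pmatrix}\alpha&\beta\\ \gamma&\delta\end{pmatrix}\in SL(2,\mathbb{C})$, $\chi^{\mathbb{A}}$ is the Möbius transformation $z\mapsto(\alpha z+\beta)/(\gamma z+\delta)$ of the Riemann sphere and $\chi^{\mathbb{A}}_\star$ denotes push-forward (which maps GCKVs to GCKVs). *)

theory Defs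
  imports "HOL-Analysis.Analysis"
begin

text \<open>Elements of SL(2,C) are represented as quadruples (alpha, beta, gamma, delta)
  standing for the matrix [[alpha, beta],[gamma, delta]].\<close>

type_synonym mat2 = "complex \<times> complex \<times> complex \<times> complex"

definition SL2 :: "mat2 set" where
  "SL2 = {(a, b, c, d). a * d - b * c = 1}"

definition mmul :: "mat2 \<Rightarrow> mat2 \<Rightarrow> mat2" where
  "mmul A B = (case A of (a, b, c, d) \<Rightarrow> case B of (a', b', c', d') \<Rightarrow>
     (a * a' + b * c', a * b' + b * d', c * a' + d * c', c * b' + d * d'))"

definition moebius :: "mat2 \<Rightarrow> complex \<Rightarrow> complex" where
  "moebius A z = (case A of (a, b, c, d) \<Rightarrow> (a * z + b) / (c * z + d))"

definition moeb_den :: "mat2 \<Rightarrow> complex \<Rightarrow> complex" where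
  "moeb_den A z = (case A of (a, b, c, d) \<Rightarrow> c * z + d)"

text \<open>The holomorphic coefficient of the GCKV xi_{mu}: xi = f(z) d_z + conj(f(z)) d_{zbar}
  with f(z) = mu0 + mu1 z + 1/2 mu2 z^2.\<close>
definition gckv_coeff :: "complex \<times> complex \<times> complex \<Rightarrow> complex \<Rightarrow> complex" where
  "gckv_coeff \<mu> z = (case \<mu> of (m0, m1, m2) \<Rightarrow> m0 + m1 * z + m2 * z^2 / 2)"

text \<open>nu are the parameters of the push-forward chi^A_* xi_{mu}: the push-forward of
  f(z) d_z is (chi'(z) f(z)) d_w at w = chi(z) (the d_{zbar} part is its conjugate).\<close>
definition is_pushforward :: "mat2 \<Rightarrow> complex \<times> complex \<times> complex \<Rightarrow> complex \<times> complex \<times> complex \<Rightarrow> bool" where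
  "is_pushforward A \<mu> \<nu> \<longleftrightarrow>
     (\<forall>z. moeb_den A z \<noteq> 0 \<longrightarrow>
        gckv_coeff \<nu> (moebius A z) = deriv (moebius A) z * gckv_coeff \<mu> z)"

definition pushforward_canonical :: "mat2 \<Rightarrow> complex \<times> complex \<times> complex \<Rightarrow> bool" where
  "pushforward_canonical A \<mu> \<longleftrightarrow>
     (\<exists>\<nu>0 \<nu>1 \<nu>2. is_pushforward A \<mu> (\<nu>0, \<nu>1, \<nu>2) \<and> \<nu>1 = 0 \<and> \<nu>2 = 2)"

definition Acal :: "complex \<Rightarrow> mat2 set" where
  "Acal c = {(d', - g' * c, g', d') | d' g'. d'^2 + c * g'^2 = 1}"

end

theory Submission
  imports Defs
begin

lemma deriv_moeb:
  assumes "a*d - b*c = 1" "c*z+d \<noteq> 0"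
  shows "deriv (moebius (a,b,c,d)) z = 1/(c*z+d)^2"
proof -
  have "((\<lambda>z. (a*z+b)/(c*z+d)) has_field_derivative (a*(c*z+d) - (a*z+b)*c)/(c*z+d)^2) (at z)"
    using assms(2) by (auto intro!: derivative_eq_intros simp: power2_eq_square)
  moreover have "(a*(c*z+d) - (a*z+b)*c) = 1" using assms(1) by (simp add: algebra_simps)
  ultimately show ?thesis unfolding moebius_def by (auto intro!: DERIV_imp_deriv)
qed

definition nuA :: "mat2 \<Rightarrow> complex \<times> complex \<times> complex \<Rightarrow> complex \<times> complex \<times> complex" where
 "nuA A m = (case A of (a,b,c,d) \<Rightarrow> case m of (m0,m1,m2) \<Rightarrow>
    (m0*a^2 - m1*a*b + m2*b^2/2, -2*m0*a*c + m1*(a*d+b*c) - m2*b*d, 2*(m0*c^2 - m1*c*d + m2*d^2/2)))"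

lemma nuA_poly:
  "gckv_coeff (nuA (a,b,c,d) (m0,m1,m2)) w = m0*(a-c*w)^2 + m1*(d*w-b)*(a-c*w) + m2/2*(d*w-b)^2"
  unfolding gckv_coeff_def nuA_def by (simp add: field_simps power2_eq_square)

lemma push_nuA:
  assumes "a*d - b*c = 1"
  shows "is_pushforward (a,b,c,d) (m0,m1,m2) (nuA (a,b,c,d) (m0,m1,m2))"
  unfolding is_pushforward_def
proof (intro allI impI)
  fix z assume h: "moeb_den (a,b,c,d) z \<noteq> 0"
  hence h': "c*z+d \<noteq> 0" by (simp add: moeb_den_def)
  let ?w = "(a*z+b)/(c*z+d)"
  have e1: "a - c*?w = 1/(c*z+d)" using h' assms by (simp add: field_simps)
  have n2: "d*(a*z+b) - b*(c*z+d) = z"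
  proof -
    have "d*(a*z+b) - b*(c*z+d) = (a*d-b*c)*z" by (simp add: algebra_simps)
    thus ?thesis using assms by simp
  qed
  have e2: "d*?w - b = z/(c*z+d)" using h' n2 by (simp add: field_simps)
  have "gckv_coeff (nuA (a,b,c,d) (m0,m1,m2)) ?w = m0*(a-c*?w)^2 + m1*(d*?w-b)*(a-c*?w) + m2/2*(d*?w-b)^2"
    by (rule nuA_poly)
  also have "\<dots> = (m0 + m1*z + m2*z^2/2)/(c*z+d)^2"
  proof -
    have "\<And>q. q\<noteq>0 \<Longrightarrow> m0*(1/q)^2 + m1*(z/q)*(1/q) + m2/2*(z/q)^2 = (m0+m1*z+m2*z^2/2)/q^2"
      by (simp add: field_simps power2_eq_square)
    thus ?thesis unfolding e1 e2 using h' by blast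
  qed
  finally show "gckv_coeff (nuA (a,b,c,d) (m0,m1,m2)) (moebius (a,b,c,d) z) =
     deriv (moebius (a,b,c,d)) z * gckv_coeff (m0,m1,m2) z"
    using deriv_moeb[OF assms h'] by (simp add: moebius_def gckv_coeff_def)
qed

lemma quad_zero:
  fixes e0 e1 e2 u :: complex
  assumes "\<And>t. t \<in> {1,-1,2} \<Longrightarrow> e0 + e1*(u+t) + e2*(u+t)^2 = 0"
  shows "e0 = 0 \<and> e1 = 0 \<and> e2 = 0"
proof -
  have A: "e0 + e1*(u+1) + e2*(u+1)^2 = 0" using assms by auto
  have B: "e0 + e1*(u-1) + e2*(u-1)^2 = 0" using assms[of "-1"] by auto
  have C: "e0 + e1*(u+2) + e2*(u+2)^2 = 0" using assms by auto
  have "e2 = 0" using A B C by algebra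
  moreover have "e1 = 0" using A B C `e2 = 0` by algebra
  ultimately show ?thesis using A by simp
qed

lemma moeb_inv:
  assumes "a*d - b*c = 1" "a - c*w \<noteq> 0"
  shows "moeb_den (a,b,c,d) ((d*w-b)/(a-c*w)) \<noteq> 0 \<and> moebius (a,b,c,d) ((d*w-b)/(a-c*w)) = w"
proof -
  have "c*((d*w-b)/(a-c*w)) + d = 1/(a-c*w)"
    using assms by (simp add: field_simps)
  moreover have "a*((d*w-b)/(a-c*w)) + b = w/(a-c*w)"
  proof -
    have "a*(d*w-b) + b*(a-c*w) = (a*d-b*c)*w" by (simp add: algebra_simps)
    hence X: "a*(d*w-b) + b*(a-c*w) = w" using assms(1) by simp
    have "a*((d*w-b)/(a-c*w)) + b = (a*(d*w-b) + b*(a-c*w))/(a-c*w)"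
      using assms(2) by (simp add: field_simps)
    thus ?thesis using X by simp
  qed
  ultimately show ?thesis using assms by (simp add: moeb_den_def moebius_def)
qed

lemma push_unique:
  assumes "a*d - b*c = 1" "is_pushforward (a,b,c,d) (m0,m1,m2) (n0,n1,n2)"
  shows "(n0,n1,n2) = nuA (a,b,c,d) (m0,m1,m2)"
proof -
  obtain k0 k1 k2 where k: "nuA (a,b,c,d) (m0,m1,m2) = (k0,k1,k2)" by (metis prod_cases3)
  have P: "is_pushforward (a,b,c,d) (m0,m1,m2) (k0,k1,k2)" using push_nuA[OF assms(1), of m0 m1 m2] k by simp
  have W: "gckv_coeff (n0,n1,n2) w = gckv_coeff (k0,k1,k2) w" if "a - c*w \<noteq> 0" for w
    using moeb_inv[OF assms(1) that] assms(2) P unfolding is_pushforward_def by metis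
  define u where "u = (if c = 0 then 0 else a/c)"
  have "(n0-k0) + (n1-k1)*(u+t) + ((n2-k2)/2)*(u+t)^2 = 0" if "t \<in> {1,-1,2}" for t
  proof -
    have "a - c*(u+t) \<noteq> 0"
    proof (cases "c = 0")
      case True
      then show ?thesis using assms(1) u_def by auto
    next
      case False
      then have "a - c*(u+t) = - c*t" using u_def by (simp add: field_simps)
      then show ?thesis using False that by auto
    qed
    from W[OF this] show ?thesis unfolding gckv_coeff_def by (simp add: field_simps) algebra
  qed
  from quad_zero[OF this] show ?thesis using k by simp
qed


lemma solve_ab0:
  fixes a b c d m0 m1 m2 :: complex
  assumes "a*d - b*c = 1" "-2*m0*a*c + m1*(a*d+b*c) - m2*b*d = 0"
    "2*m0*c^2 - 2*m1*c*d + m2*d^2 = 2"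
  shows "2*a = d*m2 - c*m1 \<and> 2*b = d*m1 - 2*c*m0"
  using assms by algebra

lemma bwd_alg0:
  fixes dd g \<gamma> \<delta> m0 m1 m2 K a0 b0 a b c d :: complex
  assumes "dd^2 + K*g^2 = 1" "4*K = 2*m0*m2 - m1^2" "2*a0 = \<delta> * m2 - \<gamma> * m1" "2*b0 = \<delta> * m1 - 2*\<gamma> * m0"
    "\<delta>^2 * m2 - 2* \<gamma> * \<delta> * m1 + 2* \<gamma>^2 * m0 = 2"
    "a = dd*a0 + (-g*K)*\<gamma>" "b = dd*b0 + (-g*K)*\<delta>" "c = g*a0 + dd*\<gamma>" "d = g*b0 + dd*\<delta>"
  shows "a*d - b*c = 1 \<and> -2*m0*a*c + m1*(a*d+b*c) - m2*b*d = 0 \<and> 2*m0*c^2 - 2*m1*c*d + m2*d^2 = 2"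
  using assms by algebra

lemma fwd_alg0:
  fixes dd g \<gamma> \<delta> m0 m1 m2 K a0 b0 a b c d :: complex
  assumes "2*a = d*m2 - c*m1" "2*b = d*m1 - 2*c*m0"
    "2*m0*c^2 - 2*m1*c*d + m2*d^2 = 2"
    "4*K = 2*m0*m2 - m1^2" "2*a0 = \<delta> * m2 - \<gamma> * m1" "2*b0 = \<delta> * m1 - 2*\<gamma> * m0"
    "\<delta>^2 * m2 - 2* \<gamma> * \<delta> * m1 + 2* \<gamma>^2 * m0 = 2"
    "dd = d*a0 - c*b0" "g = c*\<delta> - d*\<gamma>"
  shows "dd^2 + K*g^2 = 1 \<and> a = dd*a0 + (-g*K)*\<gamma> \<and> b = dd*b0 + (-g*K)*\<delta> \<and> c = g*a0 + dd*\<gamma> \<and> d = g*b0 + dd*\<delta>"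
  using assms by algebra


lemma canon_iff:
  assumes "a*d - b*c = 1"
  shows "pushforward_canonical (a,b,c,d) (m0,m1,m2) \<longleftrightarrow>
    (-2*m0*a*c + m1*(a*d+b*c) - m2*b*d = 0 \<and> 2*m0*c^2 - 2*m1*c*d + m2*d^2 = 2)"
proof
  assume "pushforward_canonical (a,b,c,d) (m0,m1,m2)"
  then obtain n0 where "is_pushforward (a,b,c,d) (m0,m1,m2) (n0,0,2)"
    unfolding pushforward_canonical_def by auto
  from push_unique[OF assms this] show "-2*m0*a*c + m1*(a*d+b*c) - m2*b*d = 0 \<and> 2*m0*c^2 - 2*m1*c*d + m2*d^2 = 2"
    unfolding nuA_def by (simp add: field_simps) algebra
next
  assume h: "-2*m0*a*c + m1*(a*d+b*c) - m2*b*d = 0 \<and> 2*m0*c^2 - 2*m1*c*d + m2*d^2 = 2"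
  have "nuA (a,b,c,d) (m0,m1,m2) = (m0*a^2 - m1*a*b + m2*b^2/2, 0, 2)"
    unfolding nuA_def using h by (simp add: field_simps) algebra
  with push_nuA[OF assms, of m0 m1 m2] show "pushforward_canonical (a,b,c,d) (m0,m1,m2)"
    unfolding pushforward_canonical_def by auto
qed

theorem corollary7p4:
  fixes \<mu>0 \<mu>1 \<mu>2 \<gamma> \<delta> :: complex
  assumes nontriv: "(\<mu>0, \<mu>1, \<mu>2) \<noteq> (0, 0, 0)"
    and cond: "\<delta>^2 * \<mu>2 / 2 - \<gamma> * \<delta> * \<mu>1 + \<gamma>^2 * \<mu>0 = 1"
  shows "{A \<in> SL2. pushforward_canonical A (\<mu>0, \<mu>1, \<mu>2)} =
     (\<lambda>B. mmul B ((\<delta> * \<mu>2 - \<gamma> * \<mu>1) / 2, \<delta> * \<mu>1 / 2 - \<gamma> * \<mu>0, \<gamma>, \<delta>))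
       ` Acal ((2 * \<mu>0 * \<mu>2 - \<mu>1^2) / 4)"
proof -
  define K where "K = (2 * \<mu>0 * \<mu>2 - \<mu>1^2) / 4"
  define a0 where "a0 = (\<delta> * \<mu>2 - \<gamma> * \<mu>1) / 2"
  define b0 where "b0 = \<delta> * \<mu>1 / 2 - \<gamma> * \<mu>0"
  have K4: "4*K = 2*\<mu>0*\<mu>2 - \<mu>1^2" unfolding K_def by simp
  have a02: "2*a0 = \<delta> * \<mu>2 - \<gamma> * \<mu>1" unfolding a0_def by simp
  have b02: "2*b0 = \<delta> * \<mu>1 - 2*\<gamma> * \<mu>0" unfolding b0_def by (simp add: field_simps)
  have c2: "\<delta>^2 * \<mu>2 - 2* \<gamma> * \<delta> * \<mu>1 + 2* \<gamma>^2 * \<mu>0 = 2"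
    using cond by (simp add: field_simps)
  have "{A \<in> SL2. pushforward_canonical A (\<mu>0, \<mu>1, \<mu>2)} = (\<lambda>B. mmul B (a0, b0, \<gamma>, \<delta>)) ` Acal K"
  proof (rule set_eqI, rule iffI)
    fix A assume "A \<in> {A \<in> SL2. pushforward_canonical A (\<mu>0, \<mu>1, \<mu>2)}"
    then obtain a b c d where A: "A = (a,b,c,d)" and det: "a*d - b*c = 1"
      and can: "pushforward_canonical (a,b,c,d) (\<mu>0, \<mu>1, \<mu>2)"
      unfolding SL2_def by auto
    from can canon_iff[OF det] have L: "-2*\<mu>0*a*c + \<mu>1*(a*d+b*c) - \<mu>2*b*d = 0"
      and Q: "2*\<mu>0*c^2 - 2*\<mu>1*c*d + \<mu>2*d^2 = 2" by auto
    from solve_ab0[OF det L Q] have ab: "2*a = d*\<mu>2 - c*\<mu>1" "2*b = d*\<mu>1 - 2*c*\<mu>0" by auto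
    define dd where "dd = d*a0 - c*b0"
    define g where "g = c*\<delta> - d*\<gamma>"
    from fwd_alg0[OF ab Q K4 a02 b02 c2 dd_def g_def]
    have F: "dd^2 + K*g^2 = 1" "a = dd*a0 + (-g*K)*\<gamma>" "b = dd*b0 + (-g*K)*\<delta>"
       "c = g*a0 + dd*\<gamma>" "d = g*b0 + dd*\<delta>" by auto
    have "(dd, -g*K, g, dd) \<in> Acal K" unfolding Acal_def using F(1) by auto
    moreover have "A = mmul (dd, -g*K, g, dd) (a0, b0, \<gamma>, \<delta>)"
      unfolding A mmul_def using F by simp
    ultimately show "A \<in> (\<lambda>B. mmul B (a0, b0, \<gamma>, \<delta>)) ` Acal K" by blast
  next
    fix A assume "A \<in> (\<lambda>B. mmul B (a0, b0, \<gamma>, \<delta>)) ` Acal K"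
    then obtain dd g where B: "dd^2 + K*g^2 = 1" and A: "A = mmul (dd, -g*K, g, dd) (a0, b0, \<gamma>, \<delta>)"
      unfolding Acal_def by (auto simp: mult.commute)
    obtain a b c d where Aq: "A = (a,b,c,d)" by (metis prod_cases4)
    from A Aq have e: "a = dd*a0 + (-g*K)*\<gamma>" "b = dd*b0 + (-g*K)*\<delta>" "c = g*a0 + dd*\<gamma>" "d = g*b0 + dd*\<delta>"
      unfolding mmul_def by auto
    from bwd_alg0[OF B K4 a02 b02 c2 e]
    have R: "a*d - b*c = 1" "-2*\<mu>0*a*c + \<mu>1*(a*d+b*c) - \<mu>2*b*d = 0" "2*\<mu>0*c^2 - 2*\<mu>1*c*d + \<mu>2*d^2 = 2"
      by auto
    show "A \<in> {A \<in> SL2. pushforward_canonical A (\<mu>0, \<mu>1, \<mu>2)}"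
      unfolding Aq SL2_def using R canon_iff[OF R(1)] by auto
  qed
  thus ?thesis unfolding K_def a0_def b0_def .
qed

end
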